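(* For every integer $k\ge 2$, $\Gamma_{\times k,t}(K_{k+1}\,\Box\,K_{k+1})=k(k+1)$.
   Context: A set $S\subseteq V(G)$ is a $k$-tuple total dominating set ($k$TDS) of a graph $G$ with $\delta(G)\ge k$ if $|N_G(x)\cap S|\ge k$ for every $x\in V(G)$. The upper $k$-tuple total domination number $\Gamma_{\times k,t}(G)$ is the maximum cardinality of a minimal (with respect to inclusion) $k$TDS of $G$. The Cartesian product $G\,\Box\,H$ has vertex set $V(G)\times V(H)$, with $(g_1,h_1)\sim(g_2,h_2)$ iff either $g_1=g_2$ and $h_1h_2\in E(H)$, or $h_1=h_2$ and $g_1g_2\in E(G)$. *)

theory Defs
  imports Main
begin

text \<open>A finite simple graph is given by a vertex set V and a symmetric, irreflexive
adjacency relation E (only its restriction to V matters).\<close>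

definition open_nbhd :: "'a set \<Rightarrow> ('a \<Rightarrow> 'a \<Rightarrow> bool) \<Rightarrow> 'a \<Rightarrow> 'a set" where
  "open_nbhd V E x = {y \<in> V. E x y}"

definition is_kTDS :: "nat \<Rightarrow> 'a set \<Rightarrow> ('a \<Rightarrow> 'a \<Rightarrow> bool) \<Rightarrow> 'a set \<Rightarrow> bool" where
  "is_kTDS k V E S \<longleftrightarrow> S \<subseteq> V \<and> (\<forall>x\<in>V. card (open_nbhd V E x \<inter> S) \<ge> k)"

definition is_minimal_kTDS :: "nat \<Rightarrow> 'a set \<Rightarrow> ('a \<Rightarrow> 'a \<Rightarrow> bool) \<Rightarrow> 'a set \<Rightarrow> bool" where
  "is_minimal_kTDS k V E S \<longleftrightarrow> is_kTDS k V E S \<and> (\<forall>T. T \<subset> S \<longrightarrow> \<not> is_kTDS k V E T)"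

text \<open>Upper k-tuple total domination number: maximum cardinality of a minimal kTDS
(meaningful for finite graphs with minimum degree at least k).\<close>
definition upper_ktuple_total_dom :: "nat \<Rightarrow> 'a set \<Rightarrow> ('a \<Rightarrow> 'a \<Rightarrow> bool) \<Rightarrow> nat" where
  "upper_ktuple_total_dom k V E = Max {card S | S. is_minimal_kTDS k V E S}"

definition complete_V :: "nat \<Rightarrow> nat set" where
  "complete_V n = {0..<n}"

definition complete_E :: "nat \<Rightarrow> nat \<Rightarrow> bool" where
  "complete_E x y \<longleftrightarrow> x \<noteq> y"

definition cart_V :: "'a set \<Rightarrow> 'b set \<Rightarrow> ('a \<times> 'b) set" where
  "cart_V V1 V2 = V1 \<times> V2"

definition cart_E :: "('a \<Rightarrow> 'a \<Rightarrow> bool) \<Rightarrow> ('b \<Rightarrow> 'b \<Rightarrow> bool) \<Rightarrow> ('a \<times> 'b) \<Rightarrow> ('a \<times> 'b) \<Rightarrow> bool" where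
  "cart_E E1 E2 p q \<longleftrightarrow>
     (fst p = fst q \<and> E2 (snd p) (snd q)) \<or> (snd p = snd q \<and> E1 (fst p) (fst q))"

end

theory Submission
  imports Defs
begin

lemma N_eq:
  assumes "a < n" "b < n"
  shows "open_nbhd ({0..<n}\<times>{0..<n}) (cart_E complete_E complete_E) (a,b)
     = {a}\<times>({0..<n}-{b}) \<union> ({0..<n}-{a})\<times>{b}"
  using assms by (auto simp: open_nbhd_def cart_E_def complete_E_def)

lemma N_card:
  assumes "a < n" "b < n"
  shows "card (open_nbhd ({0..<n}\<times>{0..<n}) (cart_E complete_E complete_E) (a,b)) = 2*(n-1)"
proof -
  have d: "{a}\<times>({0..<n}-{b}) \<inter> ({0..<n}-{a})\<times>{b} = {}" by auto
  have "card ({a}\<times>({0..<n}-{b}) \<union> ({0..<n}-{a})\<times>{b}) = card ({a}\<times>({0..<n}-{b})) + card (({0..<n}-{a})\<times>{b})"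
    by (rule card_Un_disjoint) (use d in auto)
  also have "\<dots> = 2*(n-1)" using assms by (simp add: card_cartesian_product)
  finally show ?thesis using N_eq[OF assms] by simp
qed

lemma N_sym:
  "x \<in> open_nbhd V (cart_E complete_E complete_E) y \<longleftrightarrow> x \<in> V \<and> y \<in> V \<and> y \<in> open_nbhd V (cart_E complete_E complete_E) x \<or> (x \<in> open_nbhd V (cart_E complete_E complete_E) y \<and> y \<notin> V)"
  by (auto simp: open_nbhd_def cart_E_def complete_E_def)

lemma crit:
  assumes "is_minimal_kTDS k V E S" "s \<in> S" "finite V"
  shows "\<exists>x\<in>V. s \<in> open_nbhd V E x \<and> card (open_nbhd V E x \<inter> S) = k"
proof -
  have kS: "is_kTDS k V E S" using assms(1) unfolding is_minimal_kTDS_def by auto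
  have "S - {s} \<subset> S" using assms(2) by auto
  hence "\<not> is_kTDS k V E (S - {s})" using assms(1) unfolding is_minimal_kTDS_def by auto
  moreover have "S - {s} \<subseteq> V" using kS unfolding is_kTDS_def by auto
  ultimately obtain x where x: "x \<in> V" "card (open_nbhd V E x \<inter> (S - {s})) < k"
    unfolding is_kTDS_def by force
  have ge: "card (open_nbhd V E x \<inter> S) \<ge> k" using kS x(1) unfolding is_kTDS_def by auto
  have fin: "finite (open_nbhd V E x \<inter> S)" using assms(3) by (auto simp: open_nbhd_def)
  have eq: "open_nbhd V E x \<inter> (S - {s}) = (open_nbhd V E x \<inter> S) - {s}" by auto
  show ?thesis
  proof (cases "s \<in> open_nbhd V E x")
    case True
    hence "card (open_nbhd V E x \<inter> (S - {s})) = card (open_nbhd V E x \<inter> S) - 1"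
      using eq assms(2) by (simp add: card_Diff_singleton fin)
    thus ?thesis using x ge True by auto
  next
    case False
    hence "open_nbhd V E x \<inter> (S - {s}) = open_nbhd V E x \<inter> S" by auto
    thus ?thesis using x ge by auto
  qed
qed

lemma common:
  assumes "a1 < n" "b1 < n" "a2 < n" "b2 < n" "(a1,b1) \<noteq> (a2,b2)" "n \<ge> 3"
  shows "card (open_nbhd ({0..<n}\<times>{0..<n}) (cart_E complete_E complete_E) (a1,b1)
     \<inter> open_nbhd ({0..<n}\<times>{0..<n}) (cart_E complete_E complete_E) (a2,b2)) \<le> n - 1"
proof -
  let ?I = "open_nbhd ({0..<n}\<times>{0..<n}) (cart_E complete_E complete_E) (a1,b1)
     \<inter> open_nbhd ({0..<n}\<times>{0..<n}) (cart_E complete_E complete_E) (a2,b2)"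
  have I: "?I = ({a1}\<times>({0..<n}-{b1}) \<union> ({0..<n}-{a1})\<times>{b1}) \<inter> ({a2}\<times>({0..<n}-{b2}) \<union> ({0..<n}-{a2})\<times>{b2})"
    using N_eq assms by simp
  consider "a1 = a2" | "b1 = b2" | "a1 \<noteq> a2" "b1 \<noteq> b2" by blast
  thus ?thesis
  proof cases
    case 1
    hence "?I \<subseteq> {a1}\<times>({0..<n}-{b1})" unfolding I using assms(5) by auto
    hence "card ?I \<le> card ({a1}\<times>({0..<n}-{b1}))" by (intro card_mono) auto
    thus ?thesis using assms by (simp add: card_cartesian_product)
  next
    case 2
    hence "?I \<subseteq> ({0..<n}-{a1})\<times>{b1}" unfolding I using assms(5) by auto
    hence "card ?I \<le> card (({0..<n}-{a1})\<times>{b1})" by (intro card_mono) auto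
    thus ?thesis using assms by (simp add: card_cartesian_product)
  next
    case 3
    hence "?I \<subseteq> {(a1,b2),(a2,b1)}" unfolding I by auto
    hence "card ?I \<le> card {(a1,b2),(a2,b1)}" by (intro card_mono) auto
    also have "\<dots> \<le> 2" by (simp add: card_insert_le_m1)
    finally show ?thesis using assms by simp
  qed
qed

lemma upper:
  assumes k2: "k \<ge> 2"
    and m: "is_minimal_kTDS k ({0..<k+1}\<times>{0..<k+1}) (cart_E complete_E complete_E) S"
  shows "card S \<le> k*(k+1)"
proof (rule ccontr)
  assume big: "\<not> card S \<le> k*(k+1)"
  define n where "n = k+1"
  define V where "V = {0..<n}\<times>{0..<n}"
  define N where "N = open_nbhd V (cart_E complete_E complete_E)"
  have m': "is_minimal_kTDS k V (cart_E complete_E complete_E) S" using m by (simp add: V_def n_def)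
  have kS: "is_kTDS k V (cart_E complete_E complete_E) S" using m' unfolding is_minimal_kTDS_def by auto
  have SV: "S \<subseteq> V" using kS unfolding is_kTDS_def by auto
  have finV: "finite V" by (simp add: V_def)
  have cV: "card V = n*n" by (simp add: V_def card_cartesian_product)
  define T where "T = V - S"
  have finT: "finite T" using finV by (simp add: T_def)
  have cT: "card T = n*n - card S" using SV finV cV by (simp add: T_def card_Diff_subset finite_subset)
  have cTk: "card T \<le> k" using cT big by (simp add: n_def algebra_simps)
  have NV: "N x \<subseteq> V" for x by (auto simp: N_def open_nbhd_def)
  define C where "C = {x\<in>V. card (N x \<inter> S) = k}"
  have TC: "T \<subseteq> N x \<and> card T = k" if "x \<in> C" for x
  proof -
    have "x \<in> V" using that by (simp add: C_def)
    then obtain a b where x: "x = (a,b)" "a < n" "b < n" by (cases x) (auto simp: V_def)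
    have cN: "card (N x) = 2*k" using N_card[OF x(2,3)] x(1) by (simp add: N_def V_def n_def)
    have finN: "finite (N x)" using NV finV finite_subset by blast
    have "N x = (N x \<inter> S) \<union> (N x \<inter> T)" using NV[of x] by (auto simp: T_def)
    hence "card (N x) = card (N x \<inter> S) + card (N x \<inter> T)"
      using finN by (metis card_Un_disjoint Diff_disjoint Int_Diff T_def finite_Int inf_commute)
    hence c2: "card (N x \<inter> T) = k" using cN that by (simp add: C_def)
    have "N x \<inter> T = T" using card_seteq[OF finT, of "N x \<inter> T"] c2 cTk by auto
    thus ?thesis using c2 by auto
  qed
  have cover: "S \<subseteq> (\<Union>x\<in>C. N x \<inter> S)"
  proof
    fix s assume "s \<in> S"
    from crit[OF m' this finV] obtain x where "x \<in> V" "s \<in> N x" "card (N x \<inter> S) = k"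
      by (auto simp: N_def)
    hence "x \<in> C" "s \<in> N x" by (auto simp: C_def)
    thus "s \<in> (\<Union>x\<in>C. N x \<inter> S)" using \<open>s \<in> S\<close> by blast
  qed
  have finC: "finite C" using finV by (simp add: C_def)
  have "card S \<le> card (\<Union>x\<in>C. N x \<inter> S)"
  proof (rule card_mono)
    show "finite (\<Union>x\<in>C. N x \<inter> S)" using SV finV by (meson Int_lower2 finite_UN_I finC finite_subset)
  qed (rule cover)
  also have "\<dots> \<le> (\<Sum>x\<in>C. card (N x \<inter> S))" by (rule card_UN_le[OF finC])
  also have "\<dots> = k * card C" by (simp add: C_def)
  finally have cS: "card S \<le> k * card C" .
  have "C \<noteq> {}"
  proof
    assume "C = {}" thus False using cS big by simp
  qed
  then obtain x0 where "x0 \<in> C" by blast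
  hence "card T = k" using TC by blast
  hence "2 \<le> card T" using k2 by simp
  then obtain t1 t2 where t: "t1 \<in> T" "t2 \<in> T" "t1 \<noteq> t2"
  proof -
    have "\<not> card T \<le> Suc 0" using \<open>2 \<le> card T\<close> by simp
    thus ?thesis using that card_le_Suc0_iff_eq[OF finT] by blast
  qed
  obtain a1 b1 where t1: "t1 = (a1,b1)" "a1 < n" "b1 < n" using t by (cases t1) (auto simp: T_def V_def)
  obtain a2 b2 where t2: "t2 = (a2,b2)" "a2 < n" "b2 < n" using t by (cases t2) (auto simp: T_def V_def)
  have "C \<subseteq> N t1 \<inter> N t2"
  proof
    fix x assume xC: "x \<in> C"
    have "T \<subseteq> N x" using TC[OF xC] by blast
    hence "t1 \<in> N x" "t2 \<in> N x" using t by auto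
    moreover have "x \<in> V" using xC by (simp add: C_def)
    ultimately show "x \<in> N t1 \<inter> N t2"
      unfolding N_def open_nbhd_def cart_E_def complete_E_def by (simp add: eq_commute)
  qed
  moreover have "finite (N t1 \<inter> N t2)" using NV[of t1] finV finite_subset by blast
  ultimately have "card C \<le> card (N t1 \<inter> N t2)"
    by (intro card_mono)
  also have "\<dots> \<le> n - 1" using common[OF t1(2,3) t2(2,3)] t t1 t2 k2
    by (simp add: N_def V_def n_def)
  finally have "card C \<le> k" by (simp add: n_def)
  hence "card S \<le> k * k" using cS by (meson le_trans mult_le_mono2)
  thus False using big by (simp add: algebra_simps)
qed

lemma witness:
  assumes k2: "k \<ge> 2"
  shows "is_minimal_kTDS k ({0..<k+1}\<times>{0..<k+1}) (cart_E complete_E complete_E) ({0..<k}\<times>{0..<k+1})"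
proof -
  define n where "n = k+1"
  define V where "V = {0..<n}\<times>{0..<n}"
  define N where "N = open_nbhd V (cart_E complete_E complete_E)"
  define S where "S = {0..<k}\<times>{0..<n}"
  have NE: "N (a,b) = {a}\<times>({0..<n}-{b}) \<union> ({0..<n}-{a})\<times>{b}" if "a<n" "b<n" for a b
    using N_eq[OF that] by (simp add: N_def V_def)
  have kS: "is_kTDS k V (cart_E complete_E complete_E) S"
    unfolding is_kTDS_def
  proof (intro conjI ballI)
    show "S \<subseteq> V" by (auto simp: S_def V_def n_def)
  next
    fix x assume "x \<in> V"
    then obtain a b where x: "x = (a,b)" "a < n" "b < n" by (auto simp: V_def)
    show "k \<le> card (open_nbhd V (cart_E complete_E complete_E) x \<inter> S)"
    proof (cases "a < k")
      case True
      have "{a}\<times>({0..<n}-{b}) \<subseteq> N x \<inter> S" using NE x True by (auto simp: S_def)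
      hence "card ({a}\<times>({0..<n}-{b})) \<le> card (N x \<inter> S)"
        by (intro card_mono) (auto simp: S_def)
      thus ?thesis using x by (simp add: card_cartesian_product N_def n_def)
    next
      case False
      have "{0..<k}\<times>{b} \<subseteq> N x \<inter> S" using NE x False by (auto simp: S_def n_def)
      hence "card ({0..<k}\<times>{b}) \<le> card (N x \<inter> S)"
        by (intro card_mono) (auto simp: S_def)
      thus ?thesis using x by (simp add: card_cartesian_product N_def n_def)
    qed
  qed
  have "\<not> is_kTDS k V (cart_E complete_E complete_E) T" if TS: "T \<subset> S" for T
  proof
    assume kT: "is_kTDS k V (cart_E complete_E complete_E) T"
    obtain y where y: "y \<in> S" "y \<notin> T" using psubset_imp_ex_mem[OF TS] by blast
    obtain a b where ab: "(a,b) \<in> S" "(a,b) \<notin> T" using y by (cases y) auto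
    hence ab': "a < k" "b < n" by (auto simp: S_def)
    have xV: "(k,b) \<in> V" using ab' by (simp add: V_def n_def)
    have "N (k,b) \<inter> T \<subseteq> ({0..<k}-{a})\<times>{b}"
      using NE[of k b] ab' ab that by (auto simp: S_def n_def)
    hence "card (N (k,b) \<inter> T) \<le> card (({0..<k}-{a})\<times>{b})" by (intro card_mono) auto
    also have "\<dots> = k - 1" using ab' by (simp add: card_cartesian_product)
    finally have "card (N (k,b) \<inter> T) < k" using k2 by simp
    thus False using kT xV unfolding is_kTDS_def N_def by force
  qed
  thus ?thesis using kS unfolding is_minimal_kTDS_def by (simp add: V_def S_def n_def)
qed

theorem mainTheorem9:
  fixes k :: nat
  assumes "k \<ge> 2"
  shows "upper_ktuple_total_dom k
           (cart_V (complete_V (k + 1)) (complete_V (k + 1)))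
           (cart_E complete_E complete_E) = k * (k + 1)"
proof -
  have V: "cart_V (complete_V (k + 1)) (complete_V (k + 1)) = {0..<k+1}\<times>{0..<k+1}"
    by (simp add: cart_V_def complete_V_def)
  let ?A = "{card S | S. is_minimal_kTDS k ({0..<k+1}\<times>{0..<k+1}) (cart_E complete_E complete_E) S}"
  have up: "\<forall>y\<in>?A. y \<le> k*(k+1)" using upper[OF assms] by blast
  have fin: "finite ?A"
    by (rule finite_subset[of _ "{..k*(k+1)}"]) (use up in auto)
  have mem: "k*(k+1) \<in> ?A"
  proof -
    have "card ({0..<k}\<times>{0..<k+1}) = k*(k+1)" by (simp add: card_cartesian_product)
    thus ?thesis using witness[OF assms]
      by (intro CollectI exI[of _ "{0..<k}\<times>{0..<k+1}"]) simp
  qed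
  have "Max ?A = k*(k+1)"
    using up mem by (intro Max_eqI[OF fin]) auto
  thus ?thesis unfolding upper_ktuple_total_dom_def V .
qed

end
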